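(* Let $G$ be a dicotic nonzugzwang scoring game all of whose terminal positions are numbers. Then $m(G)-\sigma(G)\leq Rs(G)\leq m(G)\leq Ls(G)\leq m(G)+\sigma(G)$.
   Context: A scoring game is $G=\langle G^L\mid G^R\rangle$ with $G^L,G^R$ finite nonempty sets of scoring games or empty sets decorated with a real, $\emptyset^s$; $\langle\emptyset^s\mid\emptyset^s\rangle$ is the number $s$. $Ls(\langle\emptyset^s\mid G^R\rangle)=s$, $Rs(\langle G^L\mid\emptyset^s\rangle)=s$, otherwise $Ls(G)=\max_{G^l\in G^L}Rs(G^l)$, $Rs(G)=\min_{G^r\in G^R}Ls(G^r)$. Disjunctive sum: Left options of $G_1+G_2$ are all $G_1^l+G_2$, $G_1+G_2^l$ (Left side $\emptyset^{\ell_1+\ell_2}$ if neither has Left options), symmetrically for Right; $H+c$ adds the number $c$ to all terminal scores; $nG$ is the sum of $n$ copies. Dicotic: at every position both players have options or neither; nonzugzwang: $Ls(H)\ge Rs(H)$ at every position. Mean: $m(G)=\lim_{n\to\infty}Ls(nG)/n=\lim_{n\to\infty}Rs(nG)/n$ (these exist and agree for dicotic nonzugzwang games). Cooling: if $G$ is a number $k$, $G_t=k$, $\sigma(G)=0$; otherwise $\widetilde G_t=\langle \{G^l_t-t\}\mid \{G^r_t+t\}\rangle$, $t_0=\min\{t\ge0: Ls(\widetilde G_t)=Rs(\widetilde G_t)\}$, $G_t=\widetilde G_t$ for $t\le t_0$ and the number $Ls(\widetilde G_{t_0})$ for $t>t_0$; $\sigma(G)=t_0$ is the temperature. *)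

theory Defs
  imports Complex_Main "HOL-Library.FSet"
begin

text \<open>A side of a game is either an empty set decorated with a real
  (Inl s, i.e. the empty set with score s) or a finite set of options (Inr A); the
  well-formedness predicate sgwf below demands that every such A be nonempty.\<close>

datatype sgame = SGame "real + sgame fset" "real + sgame fset"

primrec lside :: "sgame \<Rightarrow> real + sgame fset" where
  "lside (SGame l r) = l"
primrec rside :: "sgame \<Rightarrow> real + sgame fset" where
  "rside (SGame l r) = r"

definition opts :: "real + sgame fset \<Rightarrow> sgame fset" where
  "opts s = (case s of Inl _ \<Rightarrow> {||} | Inr A \<Rightarrow> A)"

definition lopts :: "sgame \<Rightarrow> sgame fset" where "lopts G = opts (lside G)"
definition ropts :: "sgame \<Rightarrow> sgame fset" where "ropts G = opts (rside G)"

definition num :: "real \<Rightarrow> sgame" where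
  "num s = SGame (Inl s) (Inl s)"

definition is_number :: "sgame \<Rightarrow> bool" where
  "is_number G \<longleftrightarrow> (\<exists>s. G = num s)"

inductive_set positions :: "sgame \<Rightarrow> sgame set" for G where
  self: "G \<in> positions G"
| lopt: "H \<in> positions G \<Longrightarrow> H' |\<in>| lopts H \<Longrightarrow> H' \<in> positions G"
| ropt: "H \<in> positions G \<Longrightarrow> H' |\<in>| ropts H \<Longrightarrow> H' \<in> positions G"

definition sgwf :: "sgame \<Rightarrow> bool" where
  "sgwf G \<longleftrightarrow> (\<forall>H\<in>positions G. (\<forall>A. lside H = Inr A \<longrightarrow> A \<noteq> {||}) \<and>
                                    (\<forall>A. rside H = Inr A \<longrightarrow> A \<noteq> {||}))"

primrec scores :: "sgame \<Rightarrow> real \<times> real" where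
  "scores (SGame l r) =
     (case map_sum id (fimage scores) l of
        Inl s \<Rightarrow> s
      | Inr P \<Rightarrow> Max (snd ` fset P),
      case map_sum id (fimage scores) r of
        Inl s \<Rightarrow> s
      | Inr P \<Rightarrow> Min (fst ` fset P))"

definition Ls :: "sgame \<Rightarrow> real" where "Ls G = fst (scores G)"
definition Rs :: "sgame \<Rightarrow> real" where "Rs G = snd (scores G)"

primrec shift :: "real \<Rightarrow> sgame \<Rightarrow> sgame" where
  "shift c (SGame l r) =
     SGame (map_sum (\<lambda>s. s + c) (fimage (shift c)) l) (map_sum (\<lambda>s. s + c) (fimage (shift c)) r)"

function (sequential) gplus :: "sgame \<Rightarrow> sgame \<Rightarrow> sgame" where
  "gplus (SGame gl gr) (SGame hl hr) =
     SGame
      (case (gl, hl) of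
         (Inl a, Inl b) \<Rightarrow> Inl (a + b)
       | _ \<Rightarrow> Inr ((\<lambda>x. gplus x (SGame hl hr)) |`| opts gl
                  |\<union>| (\<lambda>y. gplus (SGame gl gr) y) |`| opts hl))
      (case (gr, hr) of
         (Inl a, Inl b) \<Rightarrow> Inl (a + b)
       | _ \<Rightarrow> Inr ((\<lambda>x. gplus x (SGame hl hr)) |`| opts gr
                  |\<union>| (\<lambda>y. gplus (SGame gl gr) y) |`| opts hr))"
  by pat_completeness auto

lemma opts_size_aux: "x |\<in>| A \<Longrightarrow> size x < size_fset size A"
proof -
  assume "x |\<in>| A"
  then have "Suc (size x) \<le> (\<Sum>y\<in>fset A. Suc (size y))"
    by (intro member_le_sum) auto
  then show ?thesis by simp
qed

lemma opts_size: "x |\<in>| opts s \<Longrightarrow> size x < size (SGame s t) \<and> size x < size (SGame t s)"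
  by (cases s) (auto simp: opts_def dest!: opts_size_aux)

termination
  apply (relation "measure (\<lambda>(G, H). size G + size H)")
  apply (auto dest!: opts_size)
  done


primrec gmult :: "nat \<Rightarrow> sgame \<Rightarrow> sgame" where
  "gmult 0 G = num 0"
| "gmult (Suc n) G = gplus G (gmult n G)"

text \<open>Mean: lim Ls(nG)/n (the paper shows the limit exists for dicotic nonzugzwang games).\<close>
definition mean :: "sgame \<Rightarrow> real" where
  "mean G = lim (\<lambda>n. Ls (gmult n G) / real n)"

definition terminal :: "sgame \<Rightarrow> bool" where
  "terminal H \<longleftrightarrow> lopts H = {||} \<and> ropts H = {||}"

definition dicotic :: "sgame \<Rightarrow> bool" where
  "dicotic G \<longleftrightarrow> (\<forall>H\<in>positions G. lopts H = {||} \<longleftrightarrow> ropts H = {||})"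

definition nonzugzwang :: "sgame \<Rightarrow> bool" where
  "nonzugzwang G \<longleftrightarrow> (\<forall>H\<in>positions G. Ls H \<ge> Rs H)"

text \<open>Cooling: cool G t is G_t. For a non-number G, the auxiliary game
  tilde G_t = < G^L_t - t | G^R_t + t > is formed, t0 = min{t >= 0. Ls = Rs of it}.\<close>
primrec cool :: "sgame \<Rightarrow> real \<Rightarrow> sgame" where
  "cool (SGame l r) =
     (let L = map_sum id (fimage cool) l;
          R = map_sum id (fimage cool) r;
          tl = (\<lambda>t. SGame (map_sum id (fimage (\<lambda>f. shift (- t) (f t))) L)
                           (map_sum id (fimage (\<lambda>f. shift t (f t))) R));
          t0 = Inf {t. 0 \<le> t \<and> Ls (tl t) = Rs (tl t)}
      in if is_number (SGame l r) then (\<lambda>t. SGame l r)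
         else (\<lambda>t. if t \<le> t0 then tl t else num (Ls (tl t0))))"

definition cool_tilde :: "sgame \<Rightarrow> real \<Rightarrow> sgame" where
  "cool_tilde G t = SGame (map_sum id (fimage (\<lambda>g. shift (- t) (cool g t))) (lside G))
                          (map_sum id (fimage (\<lambda>g. shift t (cool g t))) (rside G))"

definition temp :: "sgame \<Rightarrow> real" where
  "temp G = (if is_number G then 0
             else Inf {t. 0 \<le> t \<and> Ls (cool_tilde G t) = Rs (cool_tilde G t)})"

end

theory Submission
  imports Defs "HOL-Analysis.Analysis"
begin

lemma lopts_size: "x |\<in>| lopts G \<Longrightarrow> size x < size G"
  by (cases G) (auto simp: lopts_def dest: opts_size)
lemma ropts_size: "x |\<in>| ropts G \<Longrightarrow> size x < size G"
  by (cases G) (auto simp: ropts_def dest: opts_size)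

lemma Ls_num[simp]: "Ls (num s) = s" and Rs_num[simp]: "Rs (num s) = s"
  by (simp_all add: Ls_def Rs_def num_def)

lemma Ls_game: "Ls (SGame (Inr A) r) = Max (Rs ` fset A)"
  by (cases r) (simp_all add: Ls_def Rs_def image_image)
lemma Rs_game: "Rs (SGame l (Inr B)) = Min (Ls ` fset B)"
  by (cases l) (simp_all add: Ls_def Rs_def image_image)

lemma lopts_num[simp]: "lopts (num s) = {||}" and ropts_num[simp]: "ropts (num s) = {||}"
  by (simp_all add: lopts_def ropts_def num_def opts_def)

lemma is_number_num[simp]: "is_number (num s)"
  by (auto simp: is_number_def)

inductive wfg :: "sgame \<Rightarrow> bool" where
  wf_num: "wfg (num s)"
| wf_game: "A \<noteq> {||} \<Longrightarrow> B \<noteq> {||} \<Longrightarrow> (\<forall>x. x |\<in>| A \<longrightarrow> wfg x) \<Longrightarrow> (\<forall>x. x |\<in>| B \<longrightarrow> wfg x)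
     \<Longrightarrow> wfg (SGame (Inr A) (Inr B))"

inductive good :: "sgame \<Rightarrow> bool" where
  good_num: "good (num s)"
| good_game: "A \<noteq> {||} \<Longrightarrow> B \<noteq> {||} \<Longrightarrow> (\<forall>x. x |\<in>| A \<longrightarrow> good x) \<Longrightarrow> (\<forall>x. x |\<in>| B \<longrightarrow> good x)
     \<Longrightarrow> Rs (SGame (Inr A) (Inr B)) \<le> Ls (SGame (Inr A) (Inr B))
     \<Longrightarrow> good (SGame (Inr A) (Inr B))"

lemma good_wf: "good G \<Longrightarrow> wfg G"
  by (induction rule: good.induct) (auto intro: wfg.intros)

lemma good_nz: "good G \<Longrightarrow> Rs G \<le> Ls G"
  by (induction rule: good.induct) auto

lemma wf_cases': "wfg G \<Longrightarrow> (\<exists>s. G = num s) \<or> (\<exists>A B. G = SGame (Inr A) (Inr B) \<and> A \<noteq> {||} \<and> B \<noteq> {||})"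
  by (cases rule: wfg.cases) auto

lemma not_num_game: "SGame (Inr A) r \<noteq> num s" "SGame l (Inr B) \<noteq> num s"
  by (auto simp: num_def)

lemma wf_nonnum: "wfg G \<Longrightarrow> \<not> is_number G \<Longrightarrow> \<exists>A B. G = SGame (Inr A) (Inr B) \<and> A \<noteq> {||} \<and> B \<noteq> {||}"
  using wf_cases' is_number_def by metis

lemma wf_opts_wf: "wfg G \<Longrightarrow> x |\<in>| lopts G \<Longrightarrow> wfg x" "wfg G \<Longrightarrow> x |\<in>| ropts G \<Longrightarrow> wfg x"
  by (auto elim!: wfg.cases simp: lopts_def ropts_def opts_def num_def)

lemma good_opts_good: "good G \<Longrightarrow> x |\<in>| lopts G \<Longrightarrow> good x" "good G \<Longrightarrow> x |\<in>| ropts G \<Longrightarrow> good x"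
  by (auto elim!: good.cases simp: lopts_def ropts_def opts_def num_def)

lemma is_number_iff: "wfg G \<Longrightarrow> is_number G \<longleftrightarrow> lopts G = {||}"
  "wfg G \<Longrightarrow> is_number G \<longleftrightarrow> ropts G = {||}"
  by (auto elim!: wfg.cases simp: lopts_def ropts_def opts_def is_number_def num_def)

lemma Ls_opt: "wfg G \<Longrightarrow> \<not> is_number G \<Longrightarrow> Ls G = Max (Rs ` fset (lopts G))"
  by (auto dest!: wf_nonnum simp: Ls_game lopts_def opts_def)
lemma Rs_opt: "wfg G \<Longrightarrow> \<not> is_number G \<Longrightarrow> Rs G = Min (Ls ` fset (ropts G))"
  by (auto dest!: wf_nonnum simp: Rs_game ropts_def opts_def)

lemma Ls_ge: "wfg G \<Longrightarrow> x |\<in>| lopts G \<Longrightarrow> Rs x \<le> Ls G"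
  apply (subst Ls_opt, assumption)
  using is_number_iff(1) apply fastforce
  by (rule Max_ge) auto

lemma Rs_le: "wfg G \<Longrightarrow> x |\<in>| ropts G \<Longrightarrow> Rs G \<le> Ls x"
  apply (subst Rs_opt, assumption)
  using is_number_iff(2) apply fastforce
  by (rule Min_le) auto

lemma Ls_ex: "wfg G \<Longrightarrow> \<not> is_number G \<Longrightarrow> \<exists>x. x |\<in>| lopts G \<and> Ls G = Rs x"
proof -
  assume a: "wfg G" "\<not> is_number G"
  then have ne: "lopts G \<noteq> {||}" using is_number_iff by auto
  have "Max (Rs ` fset (lopts G)) \<in> Rs ` fset (lopts G)"
    by (rule Max_in) (use ne in auto)
  then show ?thesis using Ls_opt[OF a] by auto
qed

lemma Rs_ex: "wfg G \<Longrightarrow> \<not> is_number G \<Longrightarrow> \<exists>x. x |\<in>| ropts G \<and> Rs G = Ls x"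
proof -
  assume a: "wfg G" "\<not> is_number G"
  then have ne: "ropts G \<noteq> {||}" using is_number_iff by auto
  have "Min (Ls ` fset (ropts G)) \<in> Ls ` fset (ropts G)"
    by (rule Min_in) (use ne in auto)
  then show ?thesis using Rs_opt[OF a] by auto
qed

lemma Ls_le_I: "wfg G \<Longrightarrow> \<not> is_number G \<Longrightarrow> (\<And>x. x |\<in>| lopts G \<Longrightarrow> Rs x \<le> c) \<Longrightarrow> Ls G \<le> c"
  using Ls_ex by metis
lemma Rs_ge_I: "wfg G \<Longrightarrow> \<not> is_number G \<Longrightarrow> (\<And>x. x |\<in>| ropts G \<Longrightarrow> c \<le> Ls x) \<Longrightarrow> c \<le> Rs G"
  using Rs_ex by metis

lemma shift_num[simp]: "shift c (num s) = num (s + c)"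
  by (simp add: num_def)

lemma shift_game: "shift c (SGame (Inr A) (Inr B)) = SGame (Inr (shift c |`| A)) (Inr (shift c |`| B))"
  by simp

lemma lopts_shift: "lopts (shift c G) = shift c |`| lopts G"
  by (cases G; rename_tac l r; case_tac l) (auto simp: lopts_def opts_def)
lemma ropts_shift: "ropts (shift c G) = shift c |`| ropts G"
  by (cases G; rename_tac l r; case_tac r) (auto simp: ropts_def opts_def)

lemma shift_0: "shift 0 G = G"
proof (induction G)
  case (SGame l r)
  then show ?case
    by (cases l; cases r) (auto intro!: fset.map_ident_strong)
qed

lemma shift_shift: "shift a (shift b G) = shift (b + a) G"
proof (induction G)
  case (SGame l r)
  then show ?case
    by (cases l; cases r) (auto simp: fset.map_comp intro!: fset.map_cong0 simp: algebra_simps)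
qed

lemma wf_shift: "wfg G \<Longrightarrow> wfg (shift c G)"
  by (induction rule: wfg.induct) (auto intro: wfg.intros)

lemma is_number_shift: "is_number (shift c G) \<longleftrightarrow> is_number G"
  by (cases G; rename_tac l r; case_tac l; case_tac r) (auto simp: is_number_def num_def)

lemma scores_shift: "wfg G \<Longrightarrow> Ls (shift c G) = Ls G + c \<and> Rs (shift c G) = Rs G + c"
proof (induction rule: wfg.induct)
  case (wf_num s)
  then show ?case by simp
next
  case (wf_game A B)
  have "Ls (shift c (SGame (Inr A) (Inr B))) = Max ((\<lambda>x. Rs x + c) ` fset A)"
    using wf_game by (simp add: Ls_game image_image cong: image_cong)
  also have "\<dots> = Ls (SGame (Inr A) (Inr B)) + c"
    using wf_game by (subst Max_add_commute) (auto simp: Ls_game)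
  finally have 1: "Ls (shift c (SGame (Inr A) (Inr B))) = Ls (SGame (Inr A) (Inr B)) + c" .
  have "Rs (shift c (SGame (Inr A) (Inr B))) = Min ((\<lambda>x. Ls x + c) ` fset B)"
    using wf_game by (simp add: Rs_game image_image cong: image_cong)
  also have "\<dots> = Rs (SGame (Inr A) (Inr B)) + c"
    using wf_game by (subst Min_add_commute) (auto simp: Rs_game)
  finally show ?case using 1 by simp
qed

lemma Ls_shift: "wfg G \<Longrightarrow> Ls (shift c G) = Ls G + c" and Rs_shift: "wfg G \<Longrightarrow> Rs (shift c G) = Rs G + c"
  using scores_shift by auto

lemma good_shift: "good G \<Longrightarrow> good (shift c G)"
proof (induction rule: good.induct)
  case (good_num s)
  then show ?case by (simp add: good.intros)
next
  case (good_game A B)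
  have w: "wfg (SGame (Inr A) (Inr B))" using good_game good_wf good.intros by blast
  show ?case unfolding shift_game
    apply (rule good.intros)
    using good_game Ls_shift[OF w, of c] Rs_shift[OF w, of c] by auto
qed

lemma gplus_sides: "gplus G H = SGame
  (case (lside G, lside H) of (Inl a, Inl b) \<Rightarrow> Inl (a + b)
     | _ \<Rightarrow> Inr ((\<lambda>x. gplus x H) |`| lopts G |\<union>| gplus G |`| lopts H))
  (case (rside G, rside H) of (Inl a, Inl b) \<Rightarrow> Inl (a + b)
     | _ \<Rightarrow> Inr ((\<lambda>x. gplus x H) |`| ropts G |\<union>| gplus G |`| ropts H))"
  by (cases G; cases H) (simp add: lopts_def ropts_def split: sum.splits)

lemma lopts_gplus: "lopts (gplus G H) = (\<lambda>x. gplus x H) |`| lopts G |\<union>| gplus G |`| lopts H"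
  by (subst gplus_sides) (auto simp: lopts_def opts_def split: sum.splits)
lemma ropts_gplus: "ropts (gplus G H) = (\<lambda>x. gplus x H) |`| ropts G |\<union>| gplus G |`| ropts H"
  by (subst gplus_sides) (auto simp: ropts_def opts_def split: sum.splits)

lemma gplus_num_num[simp]: "gplus (num a) (num b) = num (a + b)"
  by (simp add: num_def)

lemma gplus_num: "gplus (num a) H = shift a H"
proof (induction H)
  case (SGame l r)
  have "\<And>z. z |\<in>| opts l \<Longrightarrow> gplus (num a) z = shift a z"
    using SGame(1) by (cases l) (auto simp: opts_def)
  moreover have "\<And>z. z |\<in>| opts r \<Longrightarrow> gplus (num a) z = shift a z"
    using SGame(2) by (cases r) (auto simp: opts_def)
  ultimately show ?case
    by (cases l; cases r) (auto simp: num_def opts_def intro!: fset.map_cong0)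
qed

lemma gplus_comm: "gplus G H = gplus H G"
proof (induction "size G + size H" arbitrary: G H rule: less_induct)
  case less
  have l1: "(\<lambda>x. gplus x H) |`| lopts G = gplus H |`| lopts G"
    by (rule fset.map_cong0, rule less, simp add: lopts_size)
  have l2: "gplus G |`| lopts H = (\<lambda>x. gplus x G) |`| lopts H"
    by (rule fset.map_cong0, rule less, simp add: lopts_size)
  have r1: "(\<lambda>x. gplus x H) |`| ropts G = gplus H |`| ropts G"
    by (rule fset.map_cong0, rule less, simp add: ropts_size)
  have r2: "gplus G |`| ropts H = (\<lambda>x. gplus x G) |`| ropts H"
    by (rule fset.map_cong0, rule less, simp add: ropts_size)
  show ?case
    apply (subst (1 2) gplus_sides)
    apply (simp add: l1 l2 r1 r2 split: sum.splits)
    by (auto simp: add.commute)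
qed

lemma lside_gplus: "lside (gplus G H) = (if isl (lside G) \<and> isl (lside H) then Inl (projl (lside G) + projl (lside H))
   else Inr ((\<lambda>x. gplus x H) |`| lopts G |\<union>| gplus G |`| lopts H))"
  by (subst gplus_sides) (auto split: sum.splits)
lemma rside_gplus: "rside (gplus G H) = (if isl (rside G) \<and> isl (rside H) then Inl (projl (rside G) + projl (rside H))
   else Inr ((\<lambda>x. gplus x H) |`| ropts G |\<union>| gplus G |`| ropts H))"
  by (subst gplus_sides) (auto split: sum.splits)

lemma sgame_eqI: "lside G = lside H \<Longrightarrow> rside G = rside H \<Longrightarrow> G = H"
  by (cases G; cases H) auto

lemma isl_lside_gplus: "isl (lside (gplus G H)) \<longleftrightarrow> isl (lside G) \<and> isl (lside H)"
  and isl_rside_gplus: "isl (rside (gplus G H)) \<longleftrightarrow> isl (rside G) \<and> isl (rside H)"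
  by (simp_all add: lside_gplus rside_gplus)

lemma gplus_assoc: "gplus (gplus G H) K = gplus G (gplus H K)"
proof (induction "size G + size H + size K" arbitrary: G H K rule: less_induct)
  case less
  have a1: "\<And>x. x |\<in>| lopts G \<Longrightarrow> gplus (gplus x H) K = gplus x (gplus H K)"
       "\<And>x. x |\<in>| ropts G \<Longrightarrow> gplus (gplus x H) K = gplus x (gplus H K)"
       "\<And>x. x |\<in>| lopts H \<Longrightarrow> gplus (gplus G x) K = gplus G (gplus x K)"
       "\<And>x. x |\<in>| ropts H \<Longrightarrow> gplus (gplus G x) K = gplus G (gplus x K)"
       "\<And>x. x |\<in>| lopts K \<Longrightarrow> gplus (gplus G H) x = gplus G (gplus H x)"
       "\<And>x. x |\<in>| ropts K \<Longrightarrow> gplus (gplus G H) x = gplus G (gplus H x)"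
    by (auto dest!: lopts_size ropts_size intro!: less)
  have e1: "(\<lambda>x. gplus (gplus x H) K) |`| lopts G = (\<lambda>x. gplus x (gplus H K)) |`| lopts G"
    "(\<lambda>x. gplus (gplus G x) K) |`| lopts H = (\<lambda>x. gplus G (gplus x K)) |`| lopts H"
    "(\<lambda>x. gplus (gplus G H) x) |`| lopts K = (\<lambda>x. gplus G (gplus H x)) |`| lopts K"
    "(\<lambda>x. gplus (gplus x H) K) |`| ropts G = (\<lambda>x. gplus x (gplus H K)) |`| ropts G"
    "(\<lambda>x. gplus (gplus G x) K) |`| ropts H = (\<lambda>x. gplus G (gplus x K)) |`| ropts H"
    "(\<lambda>x. gplus (gplus G H) x) |`| ropts K = (\<lambda>x. gplus G (gplus H x)) |`| ropts K"
    by (auto intro!: fset.map_cong0 simp: a1)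
  have L: "(\<lambda>x. gplus x K) |`| lopts (gplus G H) |\<union>| gplus (gplus G H) |`| lopts K
      = (\<lambda>x. gplus x (gplus H K)) |`| lopts G |\<union>| gplus G |`| lopts (gplus H K)"
    unfolding lopts_gplus fimage_funion fset.map_comp o_def e1
    by (simp add: funion_assoc)
  have R: "(\<lambda>x. gplus x K) |`| ropts (gplus G H) |\<union>| gplus (gplus G H) |`| ropts K
      = (\<lambda>x. gplus x (gplus H K)) |`| ropts G |\<union>| gplus G |`| ropts (gplus H K)"
    unfolding ropts_gplus fimage_funion fset.map_comp o_def e1
    by (simp add: funion_assoc)
  show ?case
  proof (rule sgame_eqI)
    show "lside (gplus (gplus G H) K) = lside (gplus G (gplus H K))"
      apply (subst (1 2) lside_gplus)
      using L by (auto simp: isl_lside_gplus) (auto simp: lside_gplus)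
    show "rside (gplus (gplus G H) K) = rside (gplus G (gplus H K))"
      apply (subst (1 2) rside_gplus)
      using R by (auto simp: isl_rside_gplus) (auto simp: rside_gplus)
  qed
qed

lemma wfg_isl: "wfg G \<Longrightarrow> isl (lside G) \<longleftrightarrow> is_number G" "wfg G \<Longrightarrow> isl (rside G) \<longleftrightarrow> is_number G"
  by (auto elim!: wfg.cases simp: is_number_def num_def)

lemma gplus_nonnum: "wfg G \<Longrightarrow> wfg H \<Longrightarrow> \<not> (is_number G \<and> is_number H) \<Longrightarrow>
   gplus G H = SGame (Inr ((\<lambda>x. gplus x H) |`| lopts G |\<union>| gplus G |`| lopts H))
                     (Inr ((\<lambda>x. gplus x H) |`| ropts G |\<union>| gplus G |`| ropts H))"
  by (rule sgame_eqI) (auto simp: lside_gplus rside_gplus wfg_isl)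

lemma is_number_gplus: "wfg G \<Longrightarrow> wfg H \<Longrightarrow> is_number (gplus G H) \<longleftrightarrow> is_number G \<and> is_number H"
proof (cases "is_number G \<and> is_number H")
  case True
  then show ?thesis by (auto simp: is_number_def)
next
  case False
  assume w: "wfg G" "wfg H"
  show ?thesis using gplus_nonnum[OF w False] False not_num_game(1) unfolding is_number_def by metis
qed

lemma wfg_gplus: "wfg G \<Longrightarrow> wfg H \<Longrightarrow> wfg (gplus G H)"
proof (induction "size G + size H" arbitrary: G H rule: less_induct)
  case less
  show ?case
  proof (cases "is_number G \<and> is_number H")
    case True
    then show ?thesis by (auto simp: is_number_def intro: wfg.intros)
  next
    case False
    have ne: "lopts G \<noteq> {||} \<or> lopts H \<noteq> {||}" "ropts G \<noteq> {||} \<or> ropts H \<noteq> {||}"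
      using False less.prems is_number_iff by auto
    show ?thesis
      apply (subst gplus_nonnum[OF less.prems False])
      apply (rule wfg.intros)
      using ne apply auto[2]
      using less.prems by (auto intro!: less.hyps dest: lopts_size ropts_size wf_opts_wf)
  qed
qed

subsection \<open>Score inequalities for sums\<close>

lemma gplus_lopt1: "x |\<in>| lopts G \<Longrightarrow> gplus x H |\<in>| lopts (gplus G H)"
  and gplus_lopt2: "y |\<in>| lopts H \<Longrightarrow> gplus G y |\<in>| lopts (gplus G H)"
  and gplus_ropt1: "x |\<in>| ropts G \<Longrightarrow> gplus x H |\<in>| ropts (gplus G H)"
  and gplus_ropt2: "y |\<in>| ropts H \<Longrightarrow> gplus G y |\<in>| ropts (gplus G H)"
  by (auto simp: lopts_gplus ropts_gplus)

lemma ineq12: "good A \<Longrightarrow> good B \<Longrightarrow> Rs A + Rs B \<le> Rs (gplus A B) \<and> Ls A + Rs B \<le> Ls (gplus A B)"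
proof (induction "size A + size B" arbitrary: A B rule: less_induct)
  case less
  have wA: "wfg A" and wB: "wfg B" using less.prems good_wf by auto
  have wAB: "wfg (gplus A B)" using wA wB wfg_gplus by auto
  have B2: "Ls A + Rs B \<le> Ls (gplus A B)"
  proof (cases "is_number A")
    case True
    then obtain a where "A = num a" by (auto simp: is_number_def)
    then show ?thesis using good_nz[OF less.prems(2)] by (simp add: gplus_num Ls_shift wB)
  next
    case False
    obtain x where x: "x |\<in>| lopts A" "Ls A = Rs x" using Ls_ex[OF wA False] by auto
    have "Rs x + Rs B \<le> Rs (gplus x B)"
      using less.hyps[of x B, OF _ good_opts_good(1)[OF less.prems(1) x(1)] less.prems(2)] lopts_size[OF x(1)] by simp
    also have "\<dots> \<le> Ls (gplus A B)" by (rule Ls_ge[OF wAB gplus_lopt1[OF x(1)]])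
    finally show ?thesis using x by simp
  qed
  have B1: "Rs A + Rs B \<le> Rs (gplus A B)"
  proof (cases "is_number A \<and> is_number B")
    case True
    then show ?thesis by (auto simp: is_number_def)
  next
    case False
    show ?thesis
    proof (rule Rs_ge_I[OF wAB])
      show "\<not> is_number (gplus A B)" using False is_number_gplus wA wB by auto
      fix z assume "z |\<in>| ropts (gplus A B)"
      then consider (a) x where "x |\<in>| ropts A" "z = gplus x B" | (b) y where "y |\<in>| ropts B" "z = gplus A y"
        by (auto simp: ropts_gplus)
      then show "Rs A + Rs B \<le> Ls z"
      proof cases
        case a
        have "Ls x + Rs B \<le> Ls (gplus x B)"
          using less.hyps[of x B, OF _ good_opts_good(2)[OF less.prems(1) a(1)] less.prems(2)] ropts_size[OF a(1)] by simp
        moreover have "Rs A \<le> Ls x" using Rs_le[OF wA a(1)] .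
        ultimately show ?thesis using a by simp
      next
        case b
        have "Ls y + Rs A \<le> Ls (gplus y A)"
          using less.hyps[of y A, OF _ good_opts_good(2)[OF less.prems(2) b(1)] less.prems(1)] ropts_size[OF b(1)] by simp
        moreover have "Rs B \<le> Ls y" using Rs_le[OF wB b(1)] .
        ultimately show ?thesis using b by (simp add: gplus_comm)
      qed
    qed
  qed
  show ?case using B1 B2 by simp
qed

lemma ineq34: "good A \<Longrightarrow> good B \<Longrightarrow> Ls (gplus A B) \<le> Ls A + Ls B \<and> Rs (gplus A B) \<le> Rs A + Ls B"
proof (induction "size A + size B" arbitrary: A B rule: less_induct)
  case less
  have wA: "wfg A" and wB: "wfg B" using less.prems good_wf by auto
  have wAB: "wfg (gplus A B)" using wA wB wfg_gplus by auto
  have B4: "Rs (gplus A B) \<le> Rs A + Ls B"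
  proof (cases "is_number A")
    case True
    then obtain a where "A = num a" by (auto simp: is_number_def)
    then show ?thesis using good_nz[OF less.prems(2)] by (simp add: gplus_num Rs_shift wB)
  next
    case False
    obtain x where x: "x |\<in>| ropts A" "Rs A = Ls x" using Rs_ex[OF wA False] by auto
    have "Rs (gplus A B) \<le> Ls (gplus x B)" by (rule Rs_le[OF wAB gplus_ropt1[OF x(1)]])
    also have "\<dots> \<le> Ls x + Ls B"
      using less.hyps[of x B, OF _ good_opts_good(2)[OF less.prems(1) x(1)] less.prems(2)] ropts_size[OF x(1)] by simp
    finally show ?thesis using x by simp
  qed
  have B3: "Ls (gplus A B) \<le> Ls A + Ls B"
  proof (cases "is_number A \<and> is_number B")
    case True
    then show ?thesis by (auto simp: is_number_def)
  next
    case False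
    show ?thesis
    proof (rule Ls_le_I[OF wAB])
      show "\<not> is_number (gplus A B)" using False is_number_gplus wA wB by auto
      fix z assume "z |\<in>| lopts (gplus A B)"
      then consider (a) x where "x |\<in>| lopts A" "z = gplus x B" | (b) y where "y |\<in>| lopts B" "z = gplus A y"
        by (auto simp: lopts_gplus)
      then show "Rs z \<le> Ls A + Ls B"
      proof cases
        case a
        have "Rs (gplus x B) \<le> Rs x + Ls B"
          using less.hyps[of x B, OF _ good_opts_good(1)[OF less.prems(1) a(1)] less.prems(2)] lopts_size[OF a(1)] by simp
        moreover have "Rs x \<le> Ls A" using Ls_ge[OF wA a(1)] .
        ultimately show ?thesis using a by simp
      next
        case b
        have "Rs (gplus y A) \<le> Rs y + Ls A"
          using less.hyps[of y A, OF _ good_opts_good(1)[OF less.prems(2) b(1)] less.prems(1)] lopts_size[OF b(1)] by simp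
        moreover have "Rs y \<le> Ls B" using Ls_ge[OF wB b(1)] .
        ultimately show ?thesis using b by (simp add: gplus_comm)
      qed
    qed
  qed
  show ?case using B3 B4 by simp
qed

lemma good_gplus: "good G \<Longrightarrow> good H \<Longrightarrow> good (gplus G H)"
proof (induction "size G + size H" arbitrary: G H rule: less_induct)
  case less
  have wG: "wfg G" and wH: "wfg H" using less.prems good_wf by auto
  show ?case
  proof (cases "is_number G \<and> is_number H")
    case True
    then show ?thesis by (auto simp: is_number_def intro: good.intros)
  next
    case False
    have ne: "lopts G \<noteq> {||} \<or> lopts H \<noteq> {||}" "ropts G \<noteq> {||} \<or> ropts H \<noteq> {||}"
      using False wG wH is_number_iff by auto
    have nz: "Rs (gplus G H) \<le> Ls (gplus G H)"
    proof -
      have "Rs (gplus G H) \<le> Rs G + Ls H" using ineq34[OF less.prems] by simp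
      also have "\<dots> \<le> Ls (gplus H G)" using ineq12[OF less.prems(2,1)] by simp
      finally show ?thesis by (simp add: gplus_comm)
    qed
    have eq: "gplus G H = SGame (Inr ((\<lambda>x. gplus x H) |`| lopts G |\<union>| gplus G |`| lopts H))
                     (Inr ((\<lambda>x. gplus x H) |`| ropts G |\<union>| gplus G |`| ropts H))"
      by (rule gplus_nonnum[OF wG wH False])
    show ?thesis
      unfolding eq
      apply (rule good.intros)
      using ne apply auto[2]
      using less.prems apply (auto intro!: less.hyps dest: lopts_size ropts_size good_opts_good)[2]
      using nz unfolding eq by assumption
  qed
qed

fun sumg :: "sgame list \<Rightarrow> sgame" where
  "sumg [] = num 0"
| "sumg (x # xs) = gplus x (sumg xs)"

lemma gmult_sumg: "gmult n G = sumg (replicate n G)"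
  by (induction n) auto

lemma gplus_num0: "gplus (num 0) H = H"
  by (simp add: gplus_num shift_0)

lemma sumg_upd: "i < length xs \<Longrightarrow> sumg (xs[i := y]) = gplus y (sumg (xs[i := num 0]))"
proof (induction xs arbitrary: i)
  case Nil
  then show ?case by simp
next
  case (Cons z zs)
  show ?case
  proof (cases i)
    case 0
    then show ?thesis by (simp add: gplus_num0)
  next
    case (Suc j)
    then have "sumg (zs[j := y]) = gplus y (sumg (zs[j := num 0]))" using Cons by simp
    then show ?thesis using Suc
      by (simp flip: gplus_assoc) (simp add: gplus_comm)
  qed
qed

lemma wfg_sumg: "(\<forall>x\<in>set xs. wfg x) \<Longrightarrow> wfg (sumg xs)"
  by (induction xs) (auto intro: wfg_gplus wfg.intros)

lemma good_sumg: "(\<forall>x\<in>set xs. good x) \<Longrightarrow> good (sumg xs)"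
  by (induction xs) (auto intro: good_gplus good.intros)

lemma sumg_nums: "(\<forall>x\<in>set xs. is_number x) \<Longrightarrow> sumg xs = num (sum_list (map Ls xs))"
  by (induction xs) (auto simp: is_number_def)

lemma is_number_sumg: "(\<forall>x\<in>set xs. wfg x) \<Longrightarrow> is_number (sumg xs) \<longleftrightarrow> (\<forall>x\<in>set xs. is_number x)"
  by (induction xs) (auto simp: is_number_gplus wfg_sumg)

lemma lopts_sumg: "z |\<in>| lopts (sumg xs) \<longleftrightarrow> (\<exists>i<length xs. \<exists>y. y |\<in>| lopts (xs ! i) \<and> z = sumg (xs[i := y]))"
proof (induction xs arbitrary: z)
  case Nil
  then show ?case by simp
next
  case (Cons x xs)
  show ?case
  proof
    assume "z |\<in>| lopts (sumg (x # xs))"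
    then consider (a) y where "y |\<in>| lopts x" "z = gplus y (sumg xs)"
      | (b) w where "w |\<in>| lopts (sumg xs)" "z = gplus x w"
      by (auto simp: lopts_gplus)
    then show "\<exists>i<length (x # xs). \<exists>y. y |\<in>| lopts ((x # xs) ! i) \<and> z = sumg ((x # xs)[i := y])"
    proof cases
      case a
      then show ?thesis by (intro exI[of _ 0]) auto
    next
      case b
      then obtain j y where "j < length xs" "y |\<in>| lopts (xs ! j)" "w = sumg (xs[j := y])"
        using Cons by auto
      then show ?thesis using b by (intro exI[of _ "Suc j"]) auto
    qed
  next
    assume "\<exists>i<length (x # xs). \<exists>y. y |\<in>| lopts ((x # xs) ! i) \<and> z = sumg ((x # xs)[i := y])"
    then obtain i y where iy: "i < length (x # xs)" "y |\<in>| lopts ((x # xs) ! i)" "z = sumg ((x # xs)[i := y])"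
      by blast
    show "z |\<in>| lopts (sumg (x # xs))"
    proof (cases i)
      case 0
      then show ?thesis using iy by (auto simp: lopts_gplus)
    next
      case (Suc j)
      then have "sumg (xs[j := y]) |\<in>| lopts (sumg xs)" using Cons iy by auto
      then show ?thesis using iy Suc by (auto simp: lopts_gplus)
    qed
  qed
qed

lemma ropts_sumg: "z |\<in>| ropts (sumg xs) \<longleftrightarrow> (\<exists>i<length xs. \<exists>y. y |\<in>| ropts (xs ! i) \<and> z = sumg (xs[i := y]))"
proof (induction xs arbitrary: z)
  case Nil
  then show ?case by simp
next
  case (Cons x xs)
  show ?case
  proof
    assume "z |\<in>| ropts (sumg (x # xs))"
    then consider (a) y where "y |\<in>| ropts x" "z = gplus y (sumg xs)"
      | (b) w where "w |\<in>| ropts (sumg xs)" "z = gplus x w"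
      by (auto simp: ropts_gplus)
    then show "\<exists>i<length (x # xs). \<exists>y. y |\<in>| ropts ((x # xs) ! i) \<and> z = sumg ((x # xs)[i := y])"
    proof cases
      case a
      then show ?thesis by (intro exI[of _ 0]) auto
    next
      case b
      then obtain j y where "j < length xs" "y |\<in>| ropts (xs ! j)" "w = sumg (xs[j := y])"
        using Cons by auto
      then show ?thesis using b by (intro exI[of _ "Suc j"]) auto
    qed
  next
    assume "\<exists>i<length (x # xs). \<exists>y. y |\<in>| ropts ((x # xs) ! i) \<and> z = sumg ((x # xs)[i := y])"
    then obtain i y where iy: "i < length (x # xs)" "y |\<in>| ropts ((x # xs) ! i)" "z = sumg ((x # xs)[i := y])"
      by blast
    show "z |\<in>| ropts (sumg (x # xs))"
    proof (cases i)
      case 0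
      then show ?thesis using iy by (auto simp: ropts_gplus)
    next
      case (Suc j)
      then have "sumg (xs[j := y]) |\<in>| ropts (sumg xs)" using Cons iy by auto
      then show ?thesis using iy Suc by (auto simp: ropts_gplus)
    qed
  qed
qed

lemma Rs_sumg_ge: "(\<forall>x\<in>set xs. good x) \<Longrightarrow> sum_list (map Rs xs) \<le> Rs (sumg xs)"
proof (induction xs)
  case Nil
  then show ?case by simp
next
  case (Cons x xs)
  have "Rs x + Rs (sumg xs) \<le> Rs (sumg (x # xs))"
    using ineq12[of x "sumg xs"] Cons.prems good_sumg by auto
  then show ?case using Cons by auto
qed

lemma Ls_sumg_le: "(\<forall>x\<in>set xs. good x) \<Longrightarrow> Ls (sumg xs) \<le> sum_list (map Ls xs)"
proof (induction xs)
  case Nil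
  then show ?case by simp
next
  case (Cons x xs)
  have "Ls (sumg (x # xs)) \<le> Ls x + Ls (sumg xs)"
    using ineq34[of x "sumg xs"] Cons.prems good_sumg by auto
  then show ?case using Cons by auto
qed

lemma cool_num[simp]: "cool (num s) t = num s"
  by (simp add: num_def Let_def is_number_def)

lemma cool_game: "cool (SGame (Inr A) (Inr B)) t = (if t \<le> temp (SGame (Inr A) (Inr B))
   then cool_tilde (SGame (Inr A) (Inr B)) t
   else num (Ls (cool_tilde (SGame (Inr A) (Inr B)) (temp (SGame (Inr A) (Inr B))))))"
  by (simp add: Let_def cool_tilde_def temp_def fset.map_comp o_def not_num_game is_number_def)

lemma temp_game: "temp (SGame (Inr A) (Inr B)) =
   Inf {t. 0 \<le> t \<and> Ls (cool_tilde (SGame (Inr A) (Inr B)) t) = Rs (cool_tilde (SGame (Inr A) (Inr B)) t)}"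
  by (simp add: temp_def not_num_game is_number_def)

lemma cool_tilde_game: "cool_tilde (SGame (Inr A) (Inr B)) t =
   SGame (Inr ((\<lambda>g. shift (- t) (cool g t)) |`| A)) (Inr ((\<lambda>g. shift t (cool g t)) |`| B))"
  by (simp add: cool_tilde_def)

lemma Max_le_pointwise: "finite S \<Longrightarrow> S \<noteq> {} \<Longrightarrow> (\<And>a. a \<in> S \<Longrightarrow> f a \<le> g a) \<Longrightarrow> Max (f ` S) \<le> Max (g ` S)"
proof -
  assume a: "finite S" "S \<noteq> {}" "\<And>a. a \<in> S \<Longrightarrow> f a \<le> g a"
  have "Max (f ` S) \<in> f ` S" using a by (intro Max_in) auto
  then obtain x where "x \<in> S" "Max (f ` S) = f x" by auto
  then show ?thesis using a by (metis Max_ge finite_imageI image_eqI order_trans)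
qed

lemma Min_le_pointwise: "finite S \<Longrightarrow> S \<noteq> {} \<Longrightarrow> (\<And>a. a \<in> S \<Longrightarrow> f a \<le> g a) \<Longrightarrow> Min (f ` S) \<le> Min (g ` S)"
proof -
  assume a: "finite S" "S \<noteq> {}" "\<And>a. a \<in> S \<Longrightarrow> f a \<le> g a"
  have "Min (g ` S) \<in> g ` S" using a by (intro Min_in) auto
  then obtain x where "x \<in> S" "Min (g ` S) = g x" by auto
  then show ?thesis using a by (metis Min_le finite_imageI image_eqI order_trans)
qed

lemma Max_minus: "finite S \<Longrightarrow> S \<noteq> {} \<Longrightarrow> Max ((\<lambda>a. f a - c) ` S) = Max (f ` S) - (c::real)"
  using Max_add_commute[of S f "- c"] by simp

lemma Min_plus: "finite S \<Longrightarrow> S \<noteq> {} \<Longrightarrow> Min ((\<lambda>a. f a + c) ` S) = Min (f ` S) + (c::real)"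
  using Min_add_commute[of S f c] by simp

definition mono_ok :: "sgame \<Rightarrow> bool" where
  "mono_ok K \<longleftrightarrow> (\<forall>s t. s \<le> t \<longrightarrow> Ls (cool K t) \<le> Ls (cool K s) \<and> Ls (cool K s) - (t - s) \<le> Ls (cool K t)
       \<and> Rs (cool K s) \<le> Rs (cool K t) \<and> Rs (cool K t) \<le> Rs (cool K s) + (t - s))"

definition coolok :: "sgame \<Rightarrow> bool" where
  "coolok K \<longleftrightarrow> (\<forall>t. wfg (cool K t)) \<and> (\<forall>t. 0 \<le> t \<longrightarrow> good (cool K t)) \<and> cool K 0 = K \<and>
     mono_ok K \<and> (\<exists>T. \<forall>t\<ge>T. cool K t = cool K T) \<and>
     (\<not> is_number K \<longrightarrow> 0 \<le> temp K \<and> Ls (cool_tilde K (temp K)) = Rs (cool_tilde K (temp K)) \<and>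
        (\<forall>t. 0 \<le> t \<and> t \<le> temp K \<longrightarrow> Rs (cool_tilde K t) \<le> Ls (cool_tilde K t)))"

lemma coolok_num: "coolok (num s)"
  by (auto simp: coolok_def mono_ok_def intro: wfg.intros good.intros)

lemma coolok_game:
  fixes A B
  defines "K \<equiv> SGame (Inr A) (Inr B)"
  assumes ne: "A \<noteq> {||}" "B \<noteq> {||}"
    and gK: "good K"
    and IH: "\<And>x. x |\<in>| A |\<union>| B \<Longrightarrow> coolok x"
  shows "coolok K"
proof -
  define f where "f t = Max ((\<lambda>a. Rs (cool a t) - t) ` fset A)" for t
  define g where "g t = Min ((\<lambda>b. Ls (cool b t) + t) ` fset B)" for t
  have finA: "finite (fset A)" "fset A \<noteq> {}" and finB: "finite (fset B)" "fset B \<noteq> {}"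
    using ne by auto
  have wcool: "\<And>x t. x |\<in>| A |\<union>| B \<Longrightarrow> wfg (cool x t)" using IH by (auto simp: coolok_def)
  have mono: "\<And>x. x |\<in>| A |\<union>| B \<Longrightarrow> mono_ok x" using IH by (auto simp: coolok_def)
  have mo: "\<And>x s t. x |\<in>| A |\<union>| B \<Longrightarrow> s \<le> t \<Longrightarrow> Ls (cool x t) \<le> Ls (cool x s) \<and> Ls (cool x s) - (t - s) \<le> Ls (cool x t)
       \<and> Rs (cool x s) \<le> Rs (cool x t) \<and> Rs (cool x t) \<le> Rs (cool x s) + (t - s)"
    using mono unfolding mono_ok_def by blast
  have f_eq: "Ls (cool_tilde K t) = f t" for t
    unfolding K_def cool_tilde_game Ls_game f_def
    by (simp add: image_image Rs_shift wcool)
  have g_eq: "Rs (cool_tilde K t) = g t" for t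
    unfolding K_def cool_tilde_game Rs_game g_def
    by (simp add: image_image Ls_shift wcool)
  have f_mono: "f t \<le> f s" and f_lip: "f s - (t - s) \<le> f t" if "s \<le> t" for s t
  proof -
    show "f t \<le> f s" unfolding f_def
      apply (rule Max_le_pointwise[OF finA])
      subgoal for a using mo[of a s t] that by simp
      done
    have "f s - (t - s) = Max ((\<lambda>a. Rs (cool a s) - t) ` fset A)"
      unfolding f_def using Max_minus[OF finA, of "\<lambda>a. Rs (cool a s) - s" "t - s"] by simp
    also have "\<dots> \<le> f t" unfolding f_def
      apply (rule Max_le_pointwise[OF finA])
      subgoal for a using mo[of a s t] that by simp
      done
    finally show "f s - (t - s) \<le> f t" .
  qed
  have g_mono: "g s \<le> g t" and g_lip: "g t \<le> g s + (t - s)" if "s \<le> t" for s t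
  proof -
    show "g s \<le> g t" unfolding g_def
      apply (rule Min_le_pointwise[OF finB])
      subgoal for a using mo[of a s t] that by simp
      done
    have "g t \<le> Min ((\<lambda>b. Ls (cool b s) + t) ` fset B)" unfolding g_def
      apply (rule Min_le_pointwise[OF finB])
      subgoal for a using mo[of a s t] that by simp
      done
    also have "\<dots> = g s + (t - s)"
      unfolding g_def using Min_plus[OF finB, of "\<lambda>a. Ls (cool a s) + s" "t - s"] by simp
    finally show "g t \<le> g s + (t - s)" .
  qed
  define d where "d t = f t - g t" for t
  have d_lip: "\<bar>d x - d y\<bar> \<le> 2 * \<bar>x - y\<bar>" for x y
  proof (cases "x \<le> y")
    case True
    then show ?thesis using f_mono[OF True] f_lip[OF True] g_mono[OF True] g_lip[OF True]
      by (simp add: d_def abs_if)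
  next
    case False
    then have F: "y \<le> x" by simp
    then show ?thesis using f_mono[OF F] f_lip[OF F] g_mono[OF F] g_lip[OF F]
      by (simp add: d_def abs_if)
  qed
  have d_mono: "d t \<le> d s" if "s \<le> t" for s t
    using f_mono[OF that] g_mono[OF that] by (simp add: d_def)
  have d_cont: "continuous_on S d" for S
  proof -
    have "2-lipschitz_on S d"
      unfolding lipschitz_on_def dist_real_def using d_lip by auto
    then show ?thesis by (rule lipschitz_on_continuous_on)
  qed
  have cool0: "\<And>x. x |\<in>| A |\<union>| B \<Longrightarrow> cool x 0 = x" using IH by (auto simp: coolok_def)
  have tilde0: "cool_tilde K 0 = K"
    unfolding K_def cool_tilde_game using cool0
    by (auto simp: shift_0 intro!: fset.map_ident_strong)
  have d0: "0 \<le> d 0"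
    using good_nz[OF gK] f_eq[of 0] g_eq[of 0] by (simp add: d_def tilde0)
  obtain T1 where T1: "\<And>x t. x |\<in>| A |\<union>| B \<Longrightarrow> t \<ge> T1 \<Longrightarrow> cool x t = cool x T1"
  proof -
    have "\<forall>x\<in>fset (A |\<union>| B). \<exists>T. \<forall>t\<ge>T. cool x t = cool x T" using IH by (auto simp: coolok_def)
    then obtain Tf where Tf: "\<And>x t. x \<in> fset (A |\<union>| B) \<Longrightarrow> t \<ge> Tf x \<Longrightarrow> cool x t = cool x (Tf x)"
      by metis
    define T1 where "T1 = Max (insert 0 (Tf ` fset (A |\<union>| B)))"
    have "\<And>x. x \<in> fset (A |\<union>| B) \<Longrightarrow> Tf x \<le> T1" unfolding T1_def by (intro Max_ge) auto
    then have "\<And>x t. x |\<in>| A |\<union>| B \<Longrightarrow> t \<ge> T1 \<Longrightarrow> cool x t = cool x T1"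
      using Tf by (metis order_trans order_refl)
    then show ?thesis using that by blast
  qed
  define T where "T = max T1 0 + \<bar>d T1\<bar> + 1"
  have "d T = d T1 - 2 * (T - T1)"
  proof -
    have "f T = f T1 - (T - T1)"
    proof -
      have "f T = Max ((\<lambda>a. Rs (cool a T1) - T1 - (T - T1)) ` fset A)"
        unfolding f_def using T1[of _ T] by (intro arg_cong[where f = Max] image_cong) (auto simp: T_def)
      also have "\<dots> = f T1 - (T - T1)"
        unfolding f_def using Max_minus[OF finA, of "\<lambda>a. Rs (cool a T1) - T1" "T - T1"] by simp
      finally show ?thesis .
    qed
    moreover have "g T = g T1 + (T - T1)"
    proof -
      have "g T = Min ((\<lambda>a. Ls (cool a T1) + T1 + (T - T1)) ` fset B)"
        unfolding g_def using T1[of _ T] by (intro arg_cong[where f = Min] image_cong) (auto simp: T_def)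
      also have "\<dots> = g T1 + (T - T1)"
        unfolding g_def using Min_plus[OF finB, of "\<lambda>a. Ls (cool a T1) + T1" "T - T1"] by simp
      finally show ?thesis .
    qed
    ultimately show ?thesis by (simp add: d_def)
  qed
  then have dT: "d T < 0" "0 \<le> T" by (auto simp: T_def abs_if max_def split: if_splits)
  define Z where "Z = {t. 0 \<le> t \<and> Ls (cool_tilde K t) = Rs (cool_tilde K t)}"
  have Z_eq: "Z = {t. 0 \<le> t \<and> d t = 0}" unfolding Z_def d_def f_eq g_eq by auto
  have t0: "temp K = Inf Z" unfolding K_def temp_game Z_def by simp
  obtain z0 where z0: "z0 \<in> Z"
  proof -
    obtain x where "x \<ge> 0" "x \<le> T" "d x = 0"
      using IVT2'[of d T 0 0] dT d0 d_cont by auto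
    then show ?thesis using that Z_eq by auto
  qed
  have Zne: "Z \<noteq> {}" using z0 by auto
  have Zbdd: "bdd_below Z" unfolding Z_eq by (rule bdd_belowI[of _ 0]) auto
  have t0_nn: "0 \<le> temp K" unfolding t0 using Zne by (intro cInf_greatest) (auto simp: Z_eq)
  have t0_low: "temp K \<le> z" if "z \<in> Z" for z unfolding t0 using Zbdd that by (simp add: cInf_lower)
  have dt0: "d (temp K) = 0"
  proof (rule ccontr)
    assume nz: "d (temp K) \<noteq> 0"
    show False
    proof (cases "d (temp K) > 0")
      case True
      have "Inf Z < temp K + d (temp K) / 4" using True t0 by simp
      then obtain z where z: "z \<in> Z" "z < temp K + d (temp K) / 4"
        using cInf_less_iff[OF Zne Zbdd] by auto
      have "temp K \<le> z" using t0_low[OF z(1)] .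
      moreover have "d z = 0" using z(1) Z_eq by auto
      ultimately show False using d_lip[of z "temp K"] z(2) True by (simp add: abs_if split: if_splits)
    next
      case False
      then have neg: "d (temp K) < 0" using nz by simp
      obtain x where x: "x \<ge> 0" "x \<le> temp K" "d x = 0"
        using IVT2'[of d "temp K" 0 0] neg d0 d_cont t0_nn by auto
      then have "x \<in> Z" using Z_eq by auto
      then have "x = temp K" using t0_low x by force
      then show False using x neg by simp
    qed
  qed
  have d_nn: "0 \<le> d t" if "t \<le> temp K" for t using d_mono[OF that] dt0 by simp
  have coolK: "cool K t = (if t \<le> temp K then cool_tilde K t else num (f (temp K)))" for t
    unfolding K_def cool_game f_eq[symmetric] K_def ..
  have w_tilde: "wfg (cool_tilde K t)" for t
    unfolding K_def cool_tilde_game using ne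
    by (intro wfg.intros) (auto intro!: wf_shift wcool)
  have gcool: "\<And>x t. x |\<in>| A |\<union>| B \<Longrightarrow> 0 \<le> t \<Longrightarrow> good (cool x t)" using IH by (auto simp: coolok_def)
  have g_tilde: "good (cool_tilde K t)" if "0 \<le> t" "t \<le> temp K" for t
  proof -
    have "Rs (cool_tilde K t) \<le> Ls (cool_tilde K t)"
      using d_nn[OF that(2)] f_eq g_eq by (simp add: d_def)
    then show ?thesis
      unfolding K_def cool_tilde_game using ne that
      by (intro good.intros) (auto intro!: good_shift gcool)
  qed
  have LsK: "Ls (cool K t) = f (min t (temp K))" and RsK: "Rs (cool K t) = g (min t (temp K))" for t
    using dt0 f_eq g_eq by (auto simp: coolK min_def d_def)
  have monoK: "mono_ok K"
    unfolding mono_ok_def LsK RsK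
  proof (intro allI impI conjI)
    fix s t :: real assume st: "s \<le> t"
    have m: "min s (temp K) \<le> min t (temp K)" "min t (temp K) - min s (temp K) \<le> t - s"
      using st by (auto simp: min_def)
    show "f (min t (temp K)) \<le> f (min s (temp K))" using f_mono[OF m(1)] .
    show "f (min s (temp K)) - (t - s) \<le> f (min t (temp K))" using f_lip[OF m(1)] m(2) by linarith
    show "g (min s (temp K)) \<le> g (min t (temp K))" using g_mono[OF m(1)] .
    show "g (min t (temp K)) \<le> g (min s (temp K)) + (t - s)" using g_lip[OF m(1)] m(2) by linarith
  qed
  show ?thesis
    unfolding coolok_def
  proof (intro conjI allI impI)
    show "wfg (cool K t)" for t using w_tilde by (auto simp: coolK intro: wfg.intros)
    show "good (cool K t)" if "0 \<le> t" for t using g_tilde that by (auto simp: coolK intro: good.intros)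
    show "cool K 0 = K" using t0_nn by (simp add: coolK tilde0)
    show "mono_ok K" by (rule monoK)
    show "\<exists>T. \<forall>t\<ge>T. cool K t = cool K T"
      by (rule exI[of _ "temp K + 1"]) (auto simp: coolK)
    show "0 \<le> temp K" by (rule t0_nn)
    show "Ls (cool_tilde K (temp K)) = Rs (cool_tilde K (temp K))" using dt0 f_eq g_eq by (simp add: d_def)
    show "Rs (cool_tilde K t) \<le> Ls (cool_tilde K t)" if "0 \<le> t \<and> t \<le> temp K" for t
      using d_nn[of t] that f_eq g_eq by (simp add: d_def)
  qed
qed

lemma good_coolok: "good K \<Longrightarrow> coolok K"
proof (induction rule: good.induct)
  case (good_num s)
  then show ?case by (rule coolok_num)
next
  case (good_game A B)
  show ?case
    by (rule coolok_game) (use good_game in \<open>auto intro: good.intros\<close>)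
qed

lemma cool_wfg: "good x \<Longrightarrow> wfg (cool x t)"
  using good_coolok[of x] unfolding coolok_def by blast
lemma cool_good: "good x \<Longrightarrow> 0 \<le> t \<Longrightarrow> good (cool x t)"
  using good_coolok[of x] unfolding coolok_def by blast
lemma cool_zero: "good x \<Longrightarrow> cool x 0 = x"
  using good_coolok[of x] unfolding coolok_def by blast
lemma cool_mono: "good x \<Longrightarrow> s \<le> t \<Longrightarrow> Ls (cool x t) \<le> Ls (cool x s) \<and> Ls (cool x s) - (t - s) \<le> Ls (cool x t)
       \<and> Rs (cool x s) \<le> Rs (cool x t) \<and> Rs (cool x t) \<le> Rs (cool x s) + (t - s)"
  using good_coolok[of x] unfolding coolok_def mono_ok_def by blast
lemma temp_nn: "good x \<Longrightarrow> \<not> is_number x \<Longrightarrow> 0 \<le> temp x"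
  using good_coolok[of x] unfolding coolok_def by blast
lemma temp_att: "good x \<Longrightarrow> \<not> is_number x \<Longrightarrow> Ls (cool_tilde x (temp x)) = Rs (cool_tilde x (temp x))"
  using good_coolok[of x] unfolding coolok_def by blast

lemma cool_nonnum: "good x \<Longrightarrow> \<not> is_number x \<Longrightarrow>
   cool x t = (if t \<le> temp x then cool_tilde x t else num (Ls (cool_tilde x (temp x))))"
proof -
  assume a: "good x" "\<not> is_number x"
  obtain A B where x: "x = SGame (Inr A) (Inr B)" using wf_nonnum[OF good_wf[OF a(1)] a(2)] by blast
  show ?thesis unfolding x by (rule cool_game)
qed

lemma lopts_tilde: "lopts (cool_tilde x t) = (\<lambda>a. shift (- t) (cool a t)) |`| lopts x"
  by (cases x; rename_tac l r; case_tac l) (simp_all add: cool_tilde_def lopts_def opts_def)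
lemma ropts_tilde: "ropts (cool_tilde x t) = (\<lambda>a. shift t (cool a t)) |`| ropts x"
  by (cases x; rename_tac l r; case_tac r) (simp_all add: cool_tilde_def ropts_def opts_def)

lemma tilde_wfg: "good x \<Longrightarrow> \<not> is_number x \<Longrightarrow> wfg (cool_tilde x t)"
proof -
  assume a: "good x" "\<not> is_number x"
  then obtain A B where x: "x = SGame (Inr A) (Inr B)" "A \<noteq> {||}" "B \<noteq> {||}"
    using wf_nonnum[OF good_wf] by blast
  have gA: "good y" if "y |\<in>| A" for y
    using good_opts_good(1)[OF a(1), of y] x(1) that by (simp add: lopts_def opts_def)
  have gB: "good y" if "y |\<in>| B" for y
    using good_opts_good(2)[OF a(1), of y] x(1) that by (simp add: ropts_def opts_def)
  show ?thesis unfolding x(1) cool_tilde_game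
  proof (rule wfg.intros)
    show "(\<lambda>g. shift (- t) (cool g t)) |`| A \<noteq> {||}" using x(2) by simp
    show "(\<lambda>g. shift t (cool g t)) |`| B \<noteq> {||}" using x(3) by simp
    show "\<forall>y. y |\<in>| (\<lambda>g. shift (- t) (cool g t)) |`| A \<longrightarrow> wfg y"
      using gA by (auto intro!: wf_shift cool_wfg)
    show "\<forall>y. y |\<in>| (\<lambda>g. shift t (cool g t)) |`| B \<longrightarrow> wfg y"
      using gB by (auto intro!: wf_shift cool_wfg)
  qed
qed

definition vmast :: "sgame \<Rightarrow> real" where "vmast x = Ls (cool_tilde x (temp x))"

lemma vmast_ge: "good x \<Longrightarrow> \<not> is_number x \<Longrightarrow> a |\<in>| lopts x \<Longrightarrow> Rs (cool a (temp x)) - temp x \<le> vmast x"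
proof -
  assume a: "good x" "\<not> is_number x" "a |\<in>| lopts x"
  have "shift (- temp x) (cool a (temp x)) |\<in>| lopts (cool_tilde x (temp x))"
    using a(3) by (simp add: lopts_tilde)
  then have "Rs (shift (- temp x) (cool a (temp x))) \<le> vmast x"
    unfolding vmast_def by (rule Ls_ge[OF tilde_wfg[OF a(1,2)]])
  then show ?thesis using Rs_shift[OF cool_wfg[OF good_opts_good(1)[OF a(1,3)]]] by simp
qed

lemma vmast_le: "good x \<Longrightarrow> \<not> is_number x \<Longrightarrow> b |\<in>| ropts x \<Longrightarrow> vmast x \<le> Ls (cool b (temp x)) + temp x"
proof -
  assume a: "good x" "\<not> is_number x" "b |\<in>| ropts x"
  have "shift (temp x) (cool b (temp x)) |\<in>| ropts (cool_tilde x (temp x))"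
    using a(3) by (simp add: ropts_tilde)
  then have "Rs (cool_tilde x (temp x)) \<le> Ls (shift (temp x) (cool b (temp x)))"
    by (rule Rs_le[OF tilde_wfg[OF a(1,2)]])
  then show ?thesis using Ls_shift[OF cool_wfg[OF good_opts_good(2)[OF a(1,3)]]] temp_att[OF a(1,2)]
    by (simp add: vmast_def)
qed

lemma cool_frozen: "good x \<Longrightarrow> \<not> is_number x \<Longrightarrow> temp x < t \<Longrightarrow> cool x t = num (vmast x)"
  using cool_nonnum by (simp add: vmast_def)
lemma cool_unfrozen: "good x \<Longrightarrow> \<not> is_number x \<Longrightarrow> t \<le> temp x \<Longrightarrow> cool x t = cool_tilde x t"
  using cool_nonnum by simp
lemma cool_isnum: "is_number x \<Longrightarrow> cool x t = x"
  by (auto simp: is_number_def)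

lemma gplus_shift: "gplus (shift c A) B = shift c (gplus A B)"
proof -
  have "gplus (shift c A) B = gplus (gplus (num c) A) B" by (simp add: gplus_num)
  also have "\<dots> = gplus (num c) (gplus A B)" by (rule gplus_assoc)
  also have "\<dots> = shift c (gplus A B)" by (rule gplus_num)
  finally show ?thesis .
qed

lemma sumg_shift_upd: "i < length xs \<Longrightarrow> sumg (xs[i := shift c y]) = shift c (sumg (xs[i := y]))"
proof -
  assume i: "i < length xs"
  have "sumg (xs[i := shift c y]) = gplus (shift c y) (sumg (xs[i := num 0]))" by (rule sumg_upd[OF i])
  also have "\<dots> = shift c (gplus y (sumg (xs[i := num 0])))" by (rule gplus_shift)
  also have "gplus y (sumg (xs[i := num 0])) = sumg (xs[i := y])" by (rule sumg_upd[OF i, symmetric])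
  finally show ?thesis .
qed

lemma size_upd: "i < length xs \<Longrightarrow> sum_list (map size (xs[i := y])) + size (xs ! i) = sum_list (map size xs) + size y"
proof (induction xs arbitrary: i)
  case Nil then show ?case by simp
next
  case (Cons z zs) then show ?case by (cases i) auto
qed

abbreviation cm :: "real \<Rightarrow> sgame list \<Rightarrow> sgame list" where "cm t xs \<equiv> map (\<lambda>x. cool x t) xs"

lemma cm_upd: "cm t (xs[i := a]) = (cm t xs)[i := cool a t]"
  by (simp add: map_update)

lemma lopts_St:
  assumes gs: "\<forall>x\<in>set xs. good x" and z: "z |\<in>| lopts (sumg (cm t xs))"
  shows "\<exists>i<length xs. \<exists>a. \<not> is_number (xs ! i) \<and> t \<le> temp (xs ! i) \<and> a |\<in>| lopts (xs ! i) \<and>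
           z = shift (- t) (sumg (cm t (xs[i := a])))"
proof -
  obtain i y where iy: "i < length xs" "y |\<in>| lopts (cool (xs ! i) t)" "z = sumg ((cm t xs)[i := y])"
    using z unfolding lopts_sumg by auto
  have g: "good (xs ! i)" using gs iy(1) by auto
  have nn: "\<not> is_number (xs ! i)"
  proof
    assume "is_number (xs ! i)"
    then obtain s where "xs ! i = num s" by (auto simp: is_number_def)
    then show False using iy(2) by simp
  qed
  have le: "t \<le> temp (xs ! i)" using iy(2) cool_frozen[OF g nn] by (cases "t \<le> temp (xs ! i)") auto
  obtain a where a: "a |\<in>| lopts (xs ! i)" "y = shift (- t) (cool a t)"
    using iy(2) by (auto simp: cool_unfrozen[OF g nn le] lopts_tilde)
  have "z = shift (- t) (sumg (cm t (xs[i := a])))"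
  proof -
    have "z = sumg ((cm t xs)[i := shift (- t) (cool a t)])" using iy(3) a(2) by simp
    also have "\<dots> = shift (- t) (sumg ((cm t xs)[i := cool a t]))"
      by (rule sumg_shift_upd) (simp add: iy(1))
    also have "(cm t xs)[i := cool a t] = cm t (xs[i := a])" by (simp add: map_update)
    finally show ?thesis .
  qed
  then show ?thesis using iy(1) a(1) nn le by blast
qed

lemma ropts_St:
  assumes gs: "\<forall>x\<in>set xs. good x" and z: "z |\<in>| ropts (sumg (cm t xs))"
  shows "\<exists>i<length xs. \<exists>a. \<not> is_number (xs ! i) \<and> t \<le> temp (xs ! i) \<and> a |\<in>| ropts (xs ! i) \<and>
           z = shift t (sumg (cm t (xs[i := a])))"
proof -
  obtain i y where iy: "i < length xs" "y |\<in>| ropts (cool (xs ! i) t)" "z = sumg ((cm t xs)[i := y])"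
    using z unfolding ropts_sumg by auto
  have g: "good (xs ! i)" using gs iy(1) by auto
  have nn: "\<not> is_number (xs ! i)"
  proof
    assume "is_number (xs ! i)"
    then obtain s where "xs ! i = num s" by (auto simp: is_number_def)
    then show False using iy(2) by simp
  qed
  have le: "t \<le> temp (xs ! i)" using iy(2) cool_frozen[OF g nn] by (cases "t \<le> temp (xs ! i)") auto
  obtain a where a: "a |\<in>| ropts (xs ! i)" "y = shift t (cool a t)"
    using iy(2) by (auto simp: cool_unfrozen[OF g nn le] ropts_tilde)
  have "z = shift t (sumg (cm t (xs[i := a])))"
  proof -
    have "z = sumg ((cm t xs)[i := shift t (cool a t)])" using iy(3) a(2) by simp
    also have "\<dots> = shift t (sumg ((cm t xs)[i := cool a t]))"
      by (rule sumg_shift_upd) (simp add: iy(1))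
    also have "(cm t xs)[i := cool a t] = cm t (xs[i := a])" by (simp add: map_update)
    finally show ?thesis .
  qed
  then show ?thesis using iy(1) a(1) nn le by blast
qed

lemma lopts_St_in:
  assumes i: "i < length xs" and "good (xs ! i)" "\<not> is_number (xs ! i)" "t \<le> temp (xs ! i)" and a: "a |\<in>| lopts (xs ! i)"
  shows "shift (- t) (sumg (cm t (xs[i := a]))) |\<in>| lopts (sumg (cm t xs))"
proof -
  have y: "shift (- t) (cool a t) |\<in>| lopts ((cm t xs) ! i)" using assms by (simp add: cool_unfrozen lopts_tilde)
  have "sumg ((cm t xs)[i := shift (- t) (cool a t)]) |\<in>| lopts (sumg (cm t xs))"
    unfolding lopts_sumg using i y by (intro exI[of _ i] conjI exI[of _ "shift (- t) (cool a t)"]) auto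
  moreover have "sumg ((cm t xs)[i := shift (- t) (cool a t)]) = shift (- t) (sumg ((cm t xs)[i := cool a t]))"
    by (rule sumg_shift_upd) (simp add: i)
  moreover have "(cm t xs)[i := cool a t] = cm t (xs[i := a])" by (simp add: map_update)
  ultimately show ?thesis by simp
qed

lemma ropts_St_in:
  assumes i: "i < length xs" and "good (xs ! i)" "\<not> is_number (xs ! i)" "t \<le> temp (xs ! i)" and a: "a |\<in>| ropts (xs ! i)"
  shows "shift t (sumg (cm t (xs[i := a]))) |\<in>| ropts (sumg (cm t xs))"
proof -
  have y: "shift t (cool a t) |\<in>| ropts ((cm t xs) ! i)" using assms by (simp add: cool_unfrozen ropts_tilde)
  have "sumg ((cm t xs)[i := shift t (cool a t)]) |\<in>| ropts (sumg (cm t xs))"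
    unfolding ropts_sumg using i y by (intro exI[of _ i] conjI exI[of _ "shift t (cool a t)"]) auto
  moreover have "sumg ((cm t xs)[i := shift t (cool a t)]) = shift t (sumg ((cm t xs)[i := cool a t]))"
    by (rule sumg_shift_upd) (simp add: i)
  moreover have "(cm t xs)[i := cool a t] = cm t (xs[i := a])" by (simp add: map_update)
  ultimately show ?thesis by simp
qed

lemma tilde_nonnum: "good x \<Longrightarrow> \<not> is_number x \<Longrightarrow> \<not> is_number (cool_tilde x s)"
proof -
  assume a: "good x" "\<not> is_number x"
  then obtain A B where x: "x = SGame (Inr A) (Inr B)"
    using wf_nonnum[OF good_wf] by blast
  show ?thesis unfolding x cool_tilde_game is_number_def using not_num_game(1) by blast
qed

lemma good_upd: "\<forall>x\<in>set xs. good x \<Longrightarrow> good y \<Longrightarrow> \<forall>x\<in>set (xs[i := y]). good x"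
  using set_update_subset_insert by fastforce

lemma good_cm: "\<forall>x\<in>set xs. good x \<Longrightarrow> 0 \<le> t \<Longrightarrow> \<forall>x\<in>set (cm t xs). good x"
  using cool_good by auto

lemma frozen_split:
  assumes i: "i < length xs" and g: "good (xs ! i)" and nn: "\<not> is_number (xs ! i)" and fr: "temp (xs ! i) < t"
  shows "sumg (cm t xs) = shift (vmast (xs ! i)) (sumg ((cm t xs)[i := num 0]))"
    and "sumg (cm t (xs[i := a])) = gplus (cool a t) (sumg ((cm t xs)[i := num 0]))"
proof -
  have "cm t xs = (cm t xs)[i := num (vmast (xs ! i))]"
    using cool_frozen[OF g nn fr] i by (metis length_map list_update_id nth_map)
  then have "sumg (cm t xs) = sumg ((cm t xs)[i := num (vmast (xs ! i))])" by simp
  also have "\<dots> = gplus (num (vmast (xs ! i))) (sumg ((cm t xs)[i := num 0]))"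
    by (rule sumg_upd) (simp add: i)
  finally show "sumg (cm t xs) = shift (vmast (xs ! i)) (sumg ((cm t xs)[i := num 0]))"
    by (simp add: gplus_num)
  have "cm t (xs[i := a]) = (cm t xs)[i := cool a t]" by (simp add: map_update)
  then show "sumg (cm t (xs[i := a])) = gplus (cool a t) (sumg ((cm t xs)[i := num 0]))"
    using sumg_upd[of i "cm t xs" "cool a t"] i by simp
qed

lemma main_sum:
  "(\<forall>x\<in>set xs. good x) \<Longrightarrow> 0 \<le> t \<Longrightarrow>
    Ls (sumg (cm t xs)) \<le> Ls (sumg xs) \<and> Ls (sumg xs) \<le> Ls (sumg (cm t xs)) + t \<and>
    Rs (sumg (cm t xs)) - t \<le> Rs (sumg xs) \<and> Rs (sumg xs) \<le> Rs (sumg (cm t xs))"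
proof (induction "sum_list (map size xs)" arbitrary: xs t rule: less_induct)
  case less
  note gs = less.prems(1)
  have IH: "\<And>ys s. sum_list (map size ys) < sum_list (map size xs) \<Longrightarrow> \<forall>x\<in>set ys. good x \<Longrightarrow> 0 \<le> s \<Longrightarrow>
    Ls (sumg (cm s ys)) \<le> Ls (sumg ys) \<and> Ls (sumg ys) \<le> Ls (sumg (cm s ys)) + s \<and>
    Rs (sumg (cm s ys)) - s \<le> Rs (sumg ys) \<and> Rs (sumg ys) \<le> Rs (sumg (cm s ys))"
    using less.hyps by blast
  have smaller: "sum_list (map size (xs[i := y])) < sum_list (map size xs)"
    if "i < length xs" "size y < size (xs ! i)" for i y
    using size_upd[of i xs y] that by linarith
  have IHL: "Ls (sumg (cm s (xs[i := y]))) \<le> Ls (sumg (xs[i := y])) \<and> Ls (sumg (xs[i := y])) \<le> Ls (sumg (cm s (xs[i := y]))) + s \<and>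
    Rs (sumg (cm s (xs[i := y]))) - s \<le> Rs (sumg (xs[i := y])) \<and> Rs (sumg (xs[i := y])) \<le> Rs (sumg (cm s (xs[i := y])))"
    if a: "i < length xs" "y |\<in>| lopts (xs ! i)" "0 \<le> s" for i y s
    by (rule IH[OF smaller[OF a(1) lopts_size[OF a(2)]] good_upd[OF gs good_opts_good(1)[OF _ a(2)]] a(3)])
       (use gs a(1) in auto)
  have IHR: "Ls (sumg (cm s (xs[i := y]))) \<le> Ls (sumg (xs[i := y])) \<and> Ls (sumg (xs[i := y])) \<le> Ls (sumg (cm s (xs[i := y]))) + s \<and>
    Rs (sumg (cm s (xs[i := y]))) - s \<le> Rs (sumg (xs[i := y])) \<and> Rs (sumg (xs[i := y])) \<le> Rs (sumg (cm s (xs[i := y])))"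
    if a: "i < length xs" "y |\<in>| ropts (xs ! i)" "0 \<le> s" for i y s
    by (rule IH[OF smaller[OF a(1) ropts_size[OF a(2)]] good_upd[OF gs good_opts_good(2)[OF _ a(2)]] a(3)])
       (use gs a(1) in auto)
  have wS: "wfg (sumg xs)" using good_wf[OF good_sumg[OF gs]] .
  have gSt: "good (sumg (cm s xs))" if "0 \<le> s" for s using good_sumg[OF good_cm[OF gs that]] .
  have wSt: "wfg (sumg (cm s xs))" if "0 \<le> s" for s using good_wf[OF gSt[OF that]] .
  have wStu: "wfg (sumg (cm s (xs[i := y])))" if "0 \<le> s" "good y" for s i y
    using good_wf[OF good_sumg[OF good_cm[OF good_upd[OF gs that(2)] that(1)]]] .
  have gxi: "good (xs ! i)" if "i < length xs" for i using gs that by auto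
  have Snn_L: "\<not> is_number (xs ! i)" if "y |\<in>| lopts (xs ! i)" "i < length xs" for i y
    using that is_number_iff(1)[OF good_wf[OF gxi[OF that(2)]]] by auto
  have Snn_R: "\<not> is_number (xs ! i)" if "y |\<in>| ropts (xs ! i)" "i < length xs" for i y
    using that is_number_iff(2)[OF good_wf[OF gxi[OF that(2)]]] by auto
  have Stnn: "\<not> is_number (sumg (cm s xs))" if "0 \<le> s" "i < length xs" "\<not> is_number (xs ! i)" "s \<le> temp (xs ! i)" for s i
  proof -
    have "\<not> is_number (cool (xs ! i) s)"
      using cool_unfrozen[OF gxi[OF that(2)] that(3,4)] tilde_nonnum[OF gxi[OF that(2)] that(3)] by simp
    moreover have "cool (xs ! i) s \<in> set (cm s xs)" using that(2) by auto
    ultimately show ?thesis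
      using is_number_sumg[of "cm s xs"] good_cm[OF gs that(1)] good_wf by blast
  qed
  have claimA: "Ls (sumg (cm s xs)) \<le> Ls (sumg xs)"
    if s: "0 \<le> s" and ex: "\<exists>i<length xs. \<not> is_number (xs ! i) \<and> s \<le> temp (xs ! i)" for s
  proof -
    obtain i0 where i0: "i0 < length xs" "\<not> is_number (xs ! i0)" "s \<le> temp (xs ! i0)" using ex by blast
    show ?thesis
    proof (rule Ls_le_I[OF wSt[OF s] Stnn[OF s i0]])
      fix z assume "z |\<in>| lopts (sumg (cm s xs))"
      then obtain i a where ia: "i < length xs" "\<not> is_number (xs ! i)" "s \<le> temp (xs ! i)" "a |\<in>| lopts (xs ! i)"
          "z = shift (- s) (sumg (cm s (xs[i := a])))"
        using lopts_St[OF gs] by blast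
      have ga: "good a" using good_opts_good(1)[OF gxi[OF ia(1)] ia(4)] .
      have "Rs z = Rs (sumg (cm s (xs[i := a]))) - s"
        using Rs_shift[OF wStu[OF s ga]] ia(5) by simp
      also have "\<dots> \<le> Rs (sumg (xs[i := a]))" using IHL[OF ia(1) ia(4) s] by simp
      also have "\<dots> \<le> Ls (sumg xs)"
        by (rule Ls_ge[OF wS]) (unfold lopts_sumg, use ia in blast)
      finally show "Rs z \<le> Ls (sumg xs)" .
    qed
  qed
  have claimB: "Rs (sumg xs) \<le> Rs (sumg (cm s xs))"
    if s: "0 \<le> s" and ex: "\<exists>i<length xs. \<not> is_number (xs ! i) \<and> s \<le> temp (xs ! i)" for s
  proof -
    obtain i0 where i0: "i0 < length xs" "\<not> is_number (xs ! i0)" "s \<le> temp (xs ! i0)" using ex by blast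
    show ?thesis
    proof (rule Rs_ge_I[OF wSt[OF s] Stnn[OF s i0]])
      fix z assume "z |\<in>| ropts (sumg (cm s xs))"
      then obtain i a where ia: "i < length xs" "\<not> is_number (xs ! i)" "s \<le> temp (xs ! i)" "a |\<in>| ropts (xs ! i)"
          "z = shift s (sumg (cm s (xs[i := a])))"
        using ropts_St[OF gs] by blast
      have ga: "good a" using good_opts_good(2)[OF gxi[OF ia(1)] ia(4)] .
      have "Rs (sumg xs) \<le> Ls (sumg (xs[i := a]))"
        by (rule Rs_le[OF wS]) (unfold ropts_sumg, use ia in blast)
      also have "\<dots> \<le> Ls (sumg (cm s (xs[i := a]))) + s" using IHR[OF ia(1) ia(4) s] by simp
      also have "\<dots> = Ls z"
        using Ls_shift[OF wStu[OF s ga]] ia(5) by simp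
      finally show "Rs (sumg xs) \<le> Ls z" .
    qed
  qed
  show ?case
  proof (cases "\<forall>x\<in>set xs. is_number x")
    case True
    then have "cm t xs = xs" by (intro map_idI) (simp add: cool_isnum)
    then show ?thesis using less.prems(2) by simp
  next
    case False
    have Snn: "\<not> is_number (sumg xs)" using False is_number_sumg[of xs] gs good_wf by blast
    have i_iv: "Ls (sumg (cm t xs)) \<le> Ls (sumg xs) \<and> Rs (sumg xs) \<le> Rs (sumg (cm t xs))"
    proof (cases "\<exists>i<length xs. \<not> is_number (xs ! i) \<and> t \<le> temp (xs ! i)")
      case True
      then show ?thesis using claimA[OF less.prems(2)] claimB[OF less.prems(2)] by blast
    next
      case nofr: False
      define N where "N = {x \<in> set xs. \<not> is_number x}"
      have Nfin: "finite N" and Nne: "N \<noteq> {}" using False by (auto simp: N_def)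
      define \<tau> where "\<tau> = Max (temp ` N)"
      have "\<tau> \<in> temp ` N" unfolding \<tau>_def using Nfin Nne by (intro Max_in) auto
      then obtain x0 where x0: "x0 \<in> N" "temp x0 = \<tau>" by auto
      then obtain i0 where i0: "i0 < length xs" "xs ! i0 = x0" by (auto simp: N_def in_set_conv_nth)
      have le_tau: "temp x \<le> \<tau>" if "x \<in> N" for x unfolding \<tau>_def using Nfin that by (intro Max_ge) auto
      have x0nn: "\<not> is_number x0" using x0 by (auto simp: N_def)
      have tau_nn: "0 \<le> \<tau>" using temp_nn[OF _ x0nn] x0 gs by (auto simp: N_def)
      have frz: "temp x < t" if "x \<in> set xs" "\<not> is_number x" for x
        using nofr that by (auto simp: in_set_conv_nth)
      have tau_lt: "\<tau> < t" using frz[of x0] x0 by (auto simp: N_def)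
      have ex_tau: "\<exists>i<length xs. \<not> is_number (xs ! i) \<and> \<tau> \<le> temp (xs ! i)"
        using i0 x0 x0nn by auto
      have comp: "Rs (cool x \<tau>) = Ls (cool x t) \<and> Ls (cool x \<tau>) = Rs (cool x t)" if "x \<in> set xs" for x
      proof (cases "is_number x")
        case True
        then show ?thesis by (auto simp: is_number_def)
      next
        case nn: False
        have gx: "good x" using gs that by auto
        have xN: "x \<in> N" using that nn by (auto simp: N_def)
        have ct: "cool x t = num (vmast x)" using cool_frozen[OF gx nn frz[OF that nn]] .
        show ?thesis
        proof (cases "temp x = \<tau>")
          case True
          then have "cool x \<tau> = cool_tilde x (temp x)" using cool_unfrozen[OF gx nn, of \<tau>] by simp
          then show ?thesis using ct temp_att[OF gx nn] by (simp add: vmast_def)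
        next
          case False
          then have "temp x < \<tau>" using le_tau[OF xN] by simp
          then show ?thesis using ct cool_frozen[OF gx nn] by simp
        qed
      qed
      have allnum: "\<forall>y\<in>set (cm t xs). is_number y"
      proof
        fix y assume "y \<in> set (cm t xs)"
        then obtain x where x: "x \<in> set xs" "y = cool x t" by auto
        show "is_number y"
        proof (cases "is_number x")
          case True then show ?thesis using x cool_isnum by simp
        next
          case False then show ?thesis using x cool_frozen[of x t] frz gs by auto
        qed
      qed
      have Stt: "sumg (cm t xs) = num (sum_list (map Ls (cm t xs)))" using sumg_nums[OF allnum] .
      have gtau: "\<forall>x\<in>set (cm \<tau> xs). good x" using good_cm[OF gs tau_nn] .
      have e1: "sum_list (map Rs (cm \<tau> xs)) = sum_list (map Ls (cm t xs))"
        using comp by (simp add: o_def cong: map_cong)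
      have e2: "sum_list (map Ls (cm \<tau> xs)) = sum_list (map Ls (cm t xs))"
      proof -
        have "sum_list (map Ls (cm \<tau> xs)) = sum_list (map (\<lambda>x. Rs (cool x t)) xs)"
          using comp by (simp add: o_def cong: map_cong)
        also have "\<dots> = sum_list (map (\<lambda>x. Ls (cool x t)) xs)"
        proof (rule arg_cong[where f = sum_list], rule map_cong[OF refl])
          fix x assume "x \<in> set xs"
          then have "is_number (cool x t)" using allnum by auto
          then show "Rs (cool x t) = Ls (cool x t)" by (auto simp: is_number_def)
        qed
        finally show ?thesis by (simp add: o_def)
      qed
      have A1: "Ls (sumg (cm t xs)) \<le> Ls (sumg xs)"
      proof -
        have "Ls (sumg (cm t xs)) = sum_list (map Rs (cm \<tau> xs))" using Stt e1 by simp
        also have "\<dots> \<le> Rs (sumg (cm \<tau> xs))" by (rule Rs_sumg_ge[OF gtau])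
        also have "\<dots> \<le> Ls (sumg (cm \<tau> xs))" by (rule good_nz[OF gSt[OF tau_nn]])
        also have "\<dots> \<le> Ls (sumg xs)" by (rule claimA[OF tau_nn ex_tau])
        finally show ?thesis .
      qed
      have B1: "Rs (sumg xs) \<le> Rs (sumg (cm t xs))"
      proof -
        have "Rs (sumg xs) \<le> Rs (sumg (cm \<tau> xs))" by (rule claimB[OF tau_nn ex_tau])
        also have "\<dots> \<le> Ls (sumg (cm \<tau> xs))" by (rule good_nz[OF gSt[OF tau_nn]])
        also have "\<dots> \<le> sum_list (map Ls (cm \<tau> xs))" by (rule Ls_sumg_le[OF gtau])
        also have "\<dots> = Rs (sumg (cm t xs))" using Stt e2 by simp
        finally show ?thesis .
      qed
      show ?thesis using A1 B1 by simp
    qed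
    have ii: "Ls (sumg xs) \<le> Ls (sumg (cm t xs)) + t"
    proof (rule Ls_le_I[OF wS Snn])
      fix z assume "z |\<in>| lopts (sumg xs)"
      then obtain i a where ia: "i < length xs" "a |\<in>| lopts (xs ! i)" "z = sumg (xs[i := a])"
        unfolding lopts_sumg by blast
      have nn: "\<not> is_number (xs ! i)" using Snn_L[OF ia(2,1)] .
      have gi: "good (xs ! i)" using gxi[OF ia(1)] .
      have ga: "good a" using good_opts_good(1)[OF gi ia(2)] .
      have IHa: "Rs (sumg (xs[i := a])) \<le> Rs (sumg (cm t (xs[i := a])))" using IHL[OF ia(1,2) less.prems(2)] by simp
      show "Rs z \<le> Ls (sumg (cm t xs)) + t"
      proof (cases "t \<le> temp (xs ! i)")
        case True
        have "shift (- t) (sumg (cm t (xs[i := a]))) |\<in>| lopts (sumg (cm t xs))"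
          by (rule lopts_St_in[OF ia(1) gi nn True ia(2)])
        then have "Rs (shift (- t) (sumg (cm t (xs[i := a])))) \<le> Ls (sumg (cm t xs))"
          by (rule Ls_ge[OF wSt[OF less.prems(2)]])
        then show ?thesis using Rs_shift[OF wStu[OF less.prems(2) ga]] IHa ia(3) by simp
      next
        case False
        define \<tau> where "\<tau> = temp (xs ! i)"
        have fr: "\<tau> < t" using False by (simp add: \<tau>_def)
        define R where "R = sumg ((cm t xs)[i := num 0])"
        have gR: "good R" unfolding R_def
          by (rule good_sumg[OF good_upd[OF good_cm[OF gs less.prems(2)] good_num]])
        have gat: "good (cool a t)" using cool_good[OF ga less.prems(2)] .
        have St: "Ls (sumg (cm t xs)) = Ls R + vmast (xs ! i)"
          using frozen_split(1)[OF ia(1) gi nn fr[unfolded \<tau>_def]] Ls_shift[OF good_wf[OF gR]] by (simp add: R_def)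
        have Sa: "sumg (cm t (xs[i := a])) = gplus (cool a t) R"
          using frozen_split(2)[OF ia(1) gi nn fr[unfolded \<tau>_def]] by (simp add: R_def)
        have "Rs z \<le> Rs (gplus (cool a t) R)" using IHa Sa ia(3) by simp
        also have "\<dots> \<le> Rs (cool a t) + Ls R" using ineq34[OF gat gR] by simp
        also have "\<dots> \<le> Rs (cool a \<tau>) + (t - \<tau>) + Ls R" using cool_mono[OF ga, of \<tau> t] fr by simp
        also have "\<dots> \<le> vmast (xs ! i) + t + Ls R" using vmast_ge[OF gi nn ia(2)] by (simp add: \<tau>_def)
        finally show ?thesis using St by simp
      qed
    qed
    have iii: "Rs (sumg (cm t xs)) - t \<le> Rs (sumg xs)"
    proof (rule Rs_ge_I[OF wS Snn])
      fix z assume "z |\<in>| ropts (sumg xs)"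
      then obtain i a where ia: "i < length xs" "a |\<in>| ropts (xs ! i)" "z = sumg (xs[i := a])"
        unfolding ropts_sumg by blast
      have nn: "\<not> is_number (xs ! i)" using Snn_R[OF ia(2,1)] .
      have gi: "good (xs ! i)" using gxi[OF ia(1)] .
      have ga: "good a" using good_opts_good(2)[OF gi ia(2)] .
      have IHa: "Ls (sumg (cm t (xs[i := a]))) \<le> Ls (sumg (xs[i := a]))" using IHR[OF ia(1,2) less.prems(2)] by simp
      show "Rs (sumg (cm t xs)) - t \<le> Ls z"
      proof (cases "t \<le> temp (xs ! i)")
        case True
        have "shift t (sumg (cm t (xs[i := a]))) |\<in>| ropts (sumg (cm t xs))"
          by (rule ropts_St_in[OF ia(1) gi nn True ia(2)])
        then have "Rs (sumg (cm t xs)) \<le> Ls (shift t (sumg (cm t (xs[i := a]))))"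
          by (rule Rs_le[OF wSt[OF less.prems(2)]])
        then show ?thesis using Ls_shift[OF wStu[OF less.prems(2) ga]] IHa ia(3) by simp
      next
        case False
        define \<tau> where "\<tau> = temp (xs ! i)"
        have fr: "\<tau> < t" using False by (simp add: \<tau>_def)
        define R where "R = sumg ((cm t xs)[i := num 0])"
        have gR: "good R" unfolding R_def
          by (rule good_sumg[OF good_upd[OF good_cm[OF gs less.prems(2)] good_num]])
        have gat: "good (cool a t)" using cool_good[OF ga less.prems(2)] .
        have St: "Rs (sumg (cm t xs)) = Rs R + vmast (xs ! i)"
          using frozen_split(1)[OF ia(1) gi nn fr[unfolded \<tau>_def]] Rs_shift[OF good_wf[OF gR]] by (simp add: R_def)
        have Sa: "sumg (cm t (xs[i := a])) = gplus (cool a t) R"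
          using frozen_split(2)[OF ia(1) gi nn fr[unfolded \<tau>_def]] by (simp add: R_def)
        have "Rs (sumg (cm t xs)) - t = Rs R + vmast (xs ! i) - t" using St by simp
        also have "\<dots> \<le> Rs R + Ls (cool a \<tau>) + \<tau> - t" using vmast_le[OF gi nn ia(2)] by (simp add: \<tau>_def)
        also have "\<dots> \<le> Rs R + Ls (cool a t)" using cool_mono[OF ga, of \<tau> t] fr by simp
        also have "\<dots> \<le> Ls (gplus (cool a t) R)" using ineq12[OF gat gR] by simp
        also have "\<dots> \<le> Ls z" using IHa Sa ia(3) by simp
        finally show ?thesis .
      qed
    qed
    show ?thesis using i_iv ii iii by simp
  qed
qed

lemma positions_lopt: "H \<in> positions G \<Longrightarrow> x |\<in>| lopts H \<Longrightarrow> x \<in> positions G"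
  by (rule positions.lopt)
lemma positions_ropt: "H \<in> positions G \<Longrightarrow> x |\<in>| ropts H \<Longrightarrow> x \<in> positions G"
  by (rule positions.ropt)

lemma positions_good:
  assumes "sgwf G" "dicotic G" "nonzugzwang G" "\<forall>H\<in>positions G. terminal H \<longrightarrow> is_number H"
  shows "H \<in> positions G \<Longrightarrow> good H"
proof (induction "size H" arbitrary: H rule: less_induct)
  case less
  note Hp = less.prems
  show ?case
  proof (cases "lopts H = {||}")
    case True
    then have "ropts H = {||}" using assms(2) Hp by (auto simp: dicotic_def)
    then have "is_number H" using True assms(4) Hp by (auto simp: terminal_def)
    then show ?thesis by (auto simp: is_number_def intro: good.intros)
  next
    case False
    have Rne: "ropts H \<noteq> {||}" using False assms(2) Hp by (auto simp: dicotic_def)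
    obtain l r where H: "H = SGame l r" by (cases H)
    obtain A where A: "l = Inr A" "A \<noteq> {||}"
      using False H by (cases l) (auto simp: lopts_def opts_def)
    obtain B where B: "r = Inr B" "B \<noteq> {||}"
      using Rne H by (cases r) (auto simp: ropts_def opts_def)
    have lo: "lopts H = A" and ro: "ropts H = B" using H A B by (auto simp: lopts_def ropts_def opts_def)
    have gA: "\<forall>x. x |\<in>| A \<longrightarrow> good x"
      using less.hyps lopts_size positions_lopt[OF Hp] lo by blast
    have gB: "\<forall>x. x |\<in>| B \<longrightarrow> good x"
      using less.hyps ropts_size positions_ropt[OF Hp] ro by blast
    have nz: "Rs H \<le> Ls H" using assms(3) Hp by (auto simp: nonzugzwang_def)
    show ?thesis unfolding H A(1) B(1)
      by (rule good_game[OF A(2) B(2) gA gB]) (use nz H A B in simp)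
  qed
qed

lemma Ls_gmult_num: "Ls (gmult n (num v)) = real n * v"
proof -
  have "gmult n (num v) = num (sum_list (map Ls (replicate n (num v))))"
    unfolding gmult_sumg by (rule sumg_nums) auto
  then show ?thesis by (simp add: sum_list_replicate)
qed

lemma mean_eq:
  assumes "\<And>n. real n * v \<le> Ls (gmult n G)" "\<And>n. Ls (gmult n G) \<le> real n * v + c"
  shows "mean G = v"
proof -
  have lim: "(\<lambda>n. Ls (gmult n G) / real n) \<longlonglongrightarrow> v"
  proof (rule tendsto_sandwich[of "\<lambda>n. v" _ _ "\<lambda>n. v + c / real n"])
    show "\<forall>\<^sub>F n in sequentially. v \<le> Ls (gmult n G) / real n"
      using eventually_ge_at_top[of 1]
    proof (rule eventually_mono)
      fix n :: nat assume "1 \<le> n"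
      then show "v \<le> Ls (gmult n G) / real n" using assms(1)[of n] by (simp add: field_simps)
    qed
    show "\<forall>\<^sub>F n in sequentially. Ls (gmult n G) / real n \<le> v + c / real n"
      using eventually_ge_at_top[of 1]
    proof (rule eventually_mono)
      fix n :: nat assume "1 \<le> n"
      then show "Ls (gmult n G) / real n \<le> v + c / real n" using assms(2)[of n] by (simp add: field_simps)
    qed
    show "(\<lambda>n. v) \<longlonglongrightarrow> v" by simp
    show "(\<lambda>n. v + c / real n) \<longlonglongrightarrow> v"
      using tendsto_add[OF tendsto_const[of v] lim_const_over_n[of c]] by simp
  qed
  show ?thesis unfolding mean_def using limI[OF lim] .
qed

theorem mainTheorem5:
  fixes G :: sgame
  assumes "sgwf G"
    and "dicotic G"
    and "nonzugzwang G"
    and "\<forall>H\<in>positions G. terminal H \<longrightarrow> is_number H"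
  shows "mean G - temp G \<le> Rs G \<and> Rs G \<le> mean G \<and> mean G \<le> Ls G \<and> Ls G \<le> mean G + temp G"
proof -
  have gG: "good G" using positions_good[OF assms positions.self] .
  show ?thesis
  proof (cases "is_number G")
    case True
    then obtain s where G: "G = num s" by (auto simp: is_number_def)
    have "mean G = s" by (rule mean_eq[of s G 0]) (simp_all add: G Ls_gmult_num)
    moreover have "temp G = 0" using True by (simp add: temp_def)
    ultimately show ?thesis using G by simp
  next
    case False
    define \<tau> where "\<tau> = temp G"
    define v where "v = vmast G"
    define t where "t = \<tau> + 1"
    have tau_nn: "0 \<le> \<tau>" unfolding \<tau>_def by (rule temp_nn[OF gG False])
    have t_nn: "0 \<le> t" using tau_nn by (simp add: t_def)
    have cG: "cool G t = num v" unfolding v_def by (rule cool_frozen[OF gG False]) (simp add: t_def \<tau>_def)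
    have bounds: "real n * v \<le> Ls (gmult n G) \<and> Ls (gmult n G) \<le> real n * v + t" for n
    proof -
      have all: "\<forall>x\<in>set (replicate n G). good x" using gG by simp
      have "cm t (replicate n G) = replicate n (num v)" using cG by simp
      then have "Ls (sumg (cm t (replicate n G))) = real n * v"
        using Ls_gmult_num[of n v] by (simp add: gmult_sumg cG)
      then show ?thesis using main_sum[OF all t_nn] by (simp add: gmult_sumg)
    qed
    have mean: "mean G = v" by (rule mean_eq[of v G t]) (use bounds in auto)
    have ct: "cool G \<tau> = cool_tilde G \<tau>" using cool_unfrozen[OF gG False] by (simp add: \<tau>_def)
    have Lv: "Ls (cool G \<tau>) = v" and Rv: "Rs (cool G \<tau>) = v"
      using ct temp_att[OF gG False] by (simp_all add: v_def vmast_def \<tau>_def)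
    have m: "Ls (cool G \<tau>) \<le> Ls (cool G 0) \<and> Ls (cool G 0) - (\<tau> - 0) \<le> Ls (cool G \<tau>)
       \<and> Rs (cool G 0) \<le> Rs (cool G \<tau>) \<and> Rs (cool G \<tau>) \<le> Rs (cool G 0) + (\<tau> - 0)"
      by (rule cool_mono[OF gG tau_nn])
    then show ?thesis using Lv Rv cool_zero[OF gG] mean by (simp add: \<tau>_def)
  qed
qed

end
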